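(* For every integer $n\geq 2$, the set $\bigcup_{|\lambda|<1}\ker(W_n^{*}-\lambda I)$ spans a dense subspace of $H^2$.
   Context: $H^2$ denotes the Hardy space of analytic functions $f(z)=\sum_{k\ge0}\hat f(k)z^k$ on the open unit disk with $\sum_{k}|\hat f(k)|^2<\infty$. For $n\in\mathbb{N}$, $W_n$ is the bounded operator on $H^2$ given by $W_nf(z)=(1+z+\cdots+z^{n-1})f(z^n)$, and $W_n^{*}$ is its adjoint; $I$ is the identity and $\lambda$ ranges over complex numbers. *)

theory Defs
  imports "HOL-Analysis.Analysis"
begin

text \<open>The Hardy space H^2 is represented (isometrically) by the Taylor coefficient
  sequences of its elements: f(z) = sum_k a k z^k with sum_k |a k|^2 finite.\<close>

definition H2 :: "(nat \<Rightarrow> complex) set" where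
  "H2 = {a. summable (\<lambda>k. (cmod (a k))\<^sup>2)}"

definition h2_inner :: "(nat \<Rightarrow> complex) \<Rightarrow> (nat \<Rightarrow> complex) \<Rightarrow> complex" where
  "h2_inner a b = (\<Sum>k. a k * cnj (b k))"

definition h2_norm :: "(nat \<Rightarrow> complex) \<Rightarrow> real" where
  "h2_norm a = sqrt (\<Sum>k. (cmod (a k))\<^sup>2)"

text \<open>W_n f(z) = (1 + z + ... + z^(n-1)) f(z^n): on coefficients,
  the coefficient of z^(n k + j), j < n, equals the k-th coefficient of f.\<close>

definition W :: "nat \<Rightarrow> (nat \<Rightarrow> complex) \<Rightarrow> (nat \<Rightarrow> complex)" where
  "W n a = (\<lambda>m. a (m div n))"

definition W_adj :: "nat \<Rightarrow> (nat \<Rightarrow> complex) \<Rightarrow> (nat \<Rightarrow> complex)" where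
  "W_adj n g = (THE h. h \<in> H2 \<and> (\<forall>f\<in>H2. h2_inner (W n f) g = h2_inner f h))"

definition ker_Wadj :: "nat \<Rightarrow> complex \<Rightarrow> (nat \<Rightarrow> complex) set" where
  "ker_Wadj n \<mu> = {g \<in> H2. (\<lambda>k. W_adj n g k - \<mu> * g k) = (\<lambda>k. 0)}"

definition lin_span :: "(nat \<Rightarrow> complex) set \<Rightarrow> (nat \<Rightarrow> complex) set" where
  "lin_span S = {(\<lambda>k. \<Sum>i<(m::nat). c i * v i k) | m c v. \<forall>i<m. v i \<in> S}"

definition dense_in_H2 :: "(nat \<Rightarrow> complex) set \<Rightarrow> bool" where
  "dense_in_H2 S \<longleftrightarrow> (\<forall>f\<in>H2. \<forall>\<epsilon>>0. \<exists>g\<in>S. h2_norm (\<lambda>k. f k - g k) < \<epsilon>)"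

end

theory Submission
  imports Defs
begin


lemma H2_iff: "a \<in> H2 \<longleftrightarrow> summable (\<lambda>k. (cmod (a k))\<^sup>2)" by (simp add: H2_def)

lemma h2_norm_nonneg: "a \<in> H2 \<Longrightarrow> h2_norm a \<ge> 0"
  unfolding h2_norm_def H2_def by (simp add: suminf_nonneg)

lemma coord_le_norm: assumes "a \<in> H2" shows "cmod (a m) \<le> h2_norm a"
proof -
  have "(cmod (a m))\<^sup>2 \<le> (\<Sum>k. (cmod (a k))\<^sup>2)"
    using sum_le_suminf[of "\<lambda>k. (cmod (a k))\<^sup>2" "{m}"] assms by (simp add: H2_def)
  then show ?thesis unfolding h2_norm_def by (metis norm_ge_zero real_le_rsqrt)
qed

lemma partial_le_norm: assumes "a \<in> H2"
  shows "L2_set (\<lambda>m. cmod (a m)) {..<N} \<le> h2_norm a"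
  unfolding L2_set_def h2_norm_def
  using sum_le_suminf[of "\<lambda>k. (cmod (a k))\<^sup>2" "{..<N}"] assms by (simp add: H2_def)

lemma L2_set_sum_le:
  fixes I :: nat
  shows "L2_set (\<lambda>m. cmod (\<Sum>i<I. v i m)) A \<le> (\<Sum>i<I. L2_set (\<lambda>m. cmod (v i m)) A)"
proof (induction I)
  case 0 then show ?case by (simp add: L2_set_def)
next
  case (Suc I)
  have "L2_set (\<lambda>m. cmod (\<Sum>i<Suc I. v i m)) A \<le> L2_set (\<lambda>m. cmod (\<Sum>i<I. v i m) + cmod (v I m)) A"
    by (rule L2_set_mono) (auto intro: norm_triangle_ineq)
  also have "\<dots> \<le> L2_set (\<lambda>m. cmod (\<Sum>i<I. v i m)) A + L2_set (\<lambda>m. cmod (v I m)) A"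
    by (rule L2_set_triangle_ineq)
  also have "\<dots> \<le> (\<Sum>i<Suc I. L2_set (\<lambda>m. cmod (v i m)) A)" using Suc by simp
  finally show ?case .
qed

lemma bounded_partials_H2:
  assumes "\<And>N. L2_set (\<lambda>m. cmod (a m)) {..<N} \<le> T"
  shows "a \<in> H2" "h2_norm a \<le> T"
proof -
  have T: "T \<ge> 0" using assms[of 0] by (simp add: L2_set_def)
  have b: "(\<Sum>m<N. (cmod (a m))\<^sup>2) \<le> T\<^sup>2" for N
    using assms[of N] T unfolding L2_set_def
    by (metis sqrt_le_D)
  have s: "summable (\<lambda>m. (cmod (a m))\<^sup>2)"
    by (rule summableI_nonneg_bounded[OF _ b]) simp
  then show "a \<in> H2" by (simp add: H2_def)
  have "(\<Sum>m. (cmod (a m))\<^sup>2) \<le> T\<^sup>2" by (rule suminf_le_const[OF s b])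
  then have "sqrt (\<Sum>m. (cmod (a m))\<^sup>2) \<le> sqrt (T\<^sup>2)" by (rule real_sqrt_le_mono)
  then show "h2_norm a \<le> T" unfolding h2_norm_def using T by simp
qed

lemma minkowski:
  assumes v: "\<And>i. v i \<in> H2" and s: "summable (\<lambda>i. h2_norm (v i))"
  shows "(\<lambda>m. \<Sum>i. v i m) \<in> H2" "h2_norm (\<lambda>m. \<Sum>i. v i m) \<le> (\<Sum>i. h2_norm (v i))"
proof -
  let ?T = "\<Sum>i. h2_norm (v i)"
  have pw: "summable (\<lambda>i. v i m)" for m
    by (rule summable_comparison_test[OF _ s]) (auto intro: coord_le_norm[OF v])
  have fin: "L2_set (\<lambda>m. cmod (\<Sum>i<I. v i m)) {..<N} \<le> ?T" for I N
  proof -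
    have "L2_set (\<lambda>m. cmod (\<Sum>i<I. v i m)) {..<N} \<le> (\<Sum>i<I. L2_set (\<lambda>m. cmod (v i m)) {..<N})"
      by (rule L2_set_sum_le)
    also have "\<dots> \<le> (\<Sum>i<I. h2_norm (v i))"
      by (rule sum_mono) (rule partial_le_norm[OF v])
    also have "\<dots> \<le> ?T"
      by (rule sum_le_suminf[OF s]) (auto simp: h2_norm_nonneg v)
    finally show ?thesis .
  qed
  have lim: "(\<lambda>I. L2_set (\<lambda>m. cmod (\<Sum>i<I. v i m)) {..<N}) \<longlonglongrightarrow> L2_set (\<lambda>m. cmod (\<Sum>i. v i m)) {..<N}" for N
    unfolding L2_set_def
    by (intro tendsto_intros summable_LIMSEQ pw)
  have "L2_set (\<lambda>m. cmod (\<Sum>i. v i m)) {..<N} \<le> ?T" for N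
    by (rule LIMSEQ_le_const2[OF lim]) (use fin in auto)
  then show "(\<lambda>m. \<Sum>i. v i m) \<in> H2" "h2_norm (\<lambda>m. \<Sum>i. v i m) \<le> ?T"
    by (rule bounded_partials_H2(1), rule bounded_partials_H2(2))
qed


lemma H2_add: assumes "a \<in> H2" "b \<in> H2"
  shows "(\<lambda>k. a k + b k) \<in> H2" "h2_norm (\<lambda>k. a k + b k) \<le> h2_norm a + h2_norm b"
proof -
  have "L2_set (\<lambda>m. cmod (a m + b m)) {..<N} \<le> h2_norm a + h2_norm b" for N
  proof -
    have "L2_set (\<lambda>m. cmod (a m + b m)) {..<N} \<le> L2_set (\<lambda>m. cmod (a m) + cmod (b m)) {..<N}"
      by (rule L2_set_mono) (auto intro: norm_triangle_ineq)
    also have "\<dots> \<le> L2_set (\<lambda>m. cmod (a m)) {..<N} + L2_set (\<lambda>m. cmod (b m)) {..<N}"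
      by (rule L2_set_triangle_ineq)
    also have "\<dots> \<le> h2_norm a + h2_norm b"
      using partial_le_norm[OF assms(1)] partial_le_norm[OF assms(2)] by (intro add_mono)
    finally show ?thesis .
  qed
  then show "(\<lambda>k. a k + b k) \<in> H2" "h2_norm (\<lambda>k. a k + b k) \<le> h2_norm a + h2_norm b"
    by (rule bounded_partials_H2(1), rule bounded_partials_H2(2))
qed

lemma H2_scale: assumes "a \<in> H2"
  shows "(\<lambda>k. c * a k) \<in> H2" "h2_norm (\<lambda>k. c * a k) = cmod c * h2_norm a"
proof -
  have s: "summable (\<lambda>k. (cmod (a k))\<^sup>2)" using assms by (simp add: H2_def)
  have e: "(\<lambda>k. (cmod (c * a k))\<^sup>2) = (\<lambda>k. (cmod c)\<^sup>2 * (cmod (a k))\<^sup>2)"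
    by (simp add: norm_mult power_mult_distrib)
  show "(\<lambda>k. c * a k) \<in> H2" unfolding H2_def using summable_mult[OF s, of "(cmod c)\<^sup>2"]
    by (simp add: norm_mult power_mult_distrib)
  have "(\<Sum>k. (cmod (c * a k))\<^sup>2) = (cmod c)\<^sup>2 * (\<Sum>k. (cmod (a k))\<^sup>2)"
    unfolding e by (rule suminf_mult[OF s])
  then show "h2_norm (\<lambda>k. c * a k) = cmod c * h2_norm a"
    unfolding h2_norm_def by (simp add: real_sqrt_mult)
qed

lemma H2_zero: "(\<lambda>k. 0) \<in> H2" "h2_norm (\<lambda>k. 0) = 0"
  by (auto simp: H2_def h2_norm_def)

lemma H2_diff: assumes "a \<in> H2" "b \<in> H2"
  shows "(\<lambda>k. a k - b k) \<in> H2"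
  using H2_add(1)[OF assms(1) H2_scale(1)[OF assms(2), of "-1"]] by simp

lemma h2_norm_diff_tri: assumes "a \<in> H2" "b \<in> H2" "c \<in> H2"
  shows "h2_norm (\<lambda>k. a k - c k) \<le> h2_norm (\<lambda>k. a k - b k) + h2_norm (\<lambda>k. b k - c k)"
  using H2_add(2)[OF H2_diff[OF assms(1,2)] H2_diff[OF assms(2,3)]] by simp

lemma h2_norm_commute: "h2_norm (\<lambda>k. a k - b k) = h2_norm (\<lambda>k. b k - a k)"
  unfolding h2_norm_def by (simp add: norm_minus_commute)

lemma H2_sum: fixes m :: nat assumes "\<And>i. i < m \<Longrightarrow> v i \<in> H2"
  shows "(\<lambda>k. \<Sum>i<m. c i * v i k) \<in> H2"
  using assms
proof (induction m)
  case 0 then show ?case using H2_zero by simp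
next
  case (Suc m)
  then show ?case using H2_add(1)[OF Suc.IH H2_scale(1)[of "v m" "c m"]] by simp
qed

lemma block_div: "m \<in> {k*N..<k*N+N} \<Longrightarrow> m div N = (k::nat)"
  by (rule div_nat_eqI) (auto simp: algebra_simps)

lemma block_shift: fixes k N :: nat shows "(\<Sum>m\<in>{k*N..<k*N+N}. f m) = (\<Sum>j<N. f (N*k + j))"
proof -
  have "(\<Sum>m\<in>{0+k*N..<N+k*N}. f m) = (\<Sum>j\<in>{0..<N}. f (j + k*N))"
    by (rule sum.shift_bounds_nat_ivl)
  then show ?thesis by (simp add: atLeast0LessThan algebra_simps)
qed

lemma group_sums:
  fixes a :: "nat \<Rightarrow> real"
  assumes pos: "\<And>k. a k \<ge> 0" and s: "summable a" and N: "N > 0"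
  shows "(\<lambda>m. a (m div N)) sums (N * suminf a)"
proof -
  have blk: "(\<Sum>m\<in>{k*N..<k*N+N}. a (m div N)) = N * a k" for k
    using block_div[of _ k N] by simp
  have fin: "(\<Sum>m<P*N. a (m div N)) = N * (\<Sum>k<P. a k)" for P
    using sum.nat_group[of "\<lambda>m. a (m div N)" N P, symmetric] by (simp add: blk sum_distrib_left)
  have b: "(\<Sum>m<P. a (m div N)) \<le> N * suminf a" for P
  proof -
    have "(\<Sum>m<P. a (m div N)) \<le> (\<Sum>m<P*N. a (m div N))"
      by (rule sum_mono2) (use N pos in auto)
    also have "\<dots> \<le> N * suminf a" unfolding fin
      using sum_le_suminf[OF s, of "{..<P}"] pos by (simp add: mult_left_mono)
    finally show ?thesis .
  qed
  have sm: "summable (\<lambda>m. a (m div N))"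
    by (rule summableI_nonneg_bounded[OF _ b]) (simp add: pos)
  have "(\<lambda>k. \<Sum>m\<in>{k*N..<k*N+N}. a (m div N)) sums (\<Sum>m. a (m div N))"
    by (rule sums_group[OF summable_sums[OF sm] N])
  then have "(\<lambda>k. N * a k) sums (\<Sum>m. a (m div N))" by (simp add: blk)
  moreover have "(\<lambda>k. N * a k) sums (N * suminf a)" by (rule sums_mult[OF summable_sums[OF s]])
  ultimately have "(\<Sum>m. a (m div N)) = N * suminf a" by (rule sums_unique2)
  then show ?thesis using summable_sums[OF sm] by simp
qed

lemma W_gen_norm:
  assumes u: "u \<in> H2" and N: "N > 0"
  shows "(\<lambda>m. u (m div N)) \<in> H2" "h2_norm (\<lambda>m. u (m div N)) = sqrt N * h2_norm u"
proof -
  have g: "(\<lambda>m. (cmod (u (m div N)))\<^sup>2) sums (N * (\<Sum>k. (cmod (u k))\<^sup>2))"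
    using group_sums[of "\<lambda>k. (cmod (u k))\<^sup>2" N] u N by (simp add: H2_def)
  then show "(\<lambda>m. u (m div N)) \<in> H2" by (auto simp: H2_def sums_summable)
  show "h2_norm (\<lambda>m. u (m div N)) = sqrt N * h2_norm u"
    unfolding h2_norm_def using sums_unique[OF g, symmetric] by (simp add: real_sqrt_mult)
qed


definition Bop :: "nat \<Rightarrow> (nat \<Rightarrow> complex) \<Rightarrow> (nat \<Rightarrow> complex)" where
  "Bop n g = (\<lambda>k. \<Sum>j<n. g (n*k + j))"

lemma sq_sum_le: fixes z :: "nat \<Rightarrow> complex"
  shows "(cmod (\<Sum>j<n. z j))\<^sup>2 \<le> n * (\<Sum>j<n. (cmod (z j))\<^sup>2)"
proof -
  have "cmod (\<Sum>j<n. z j) \<le> (\<Sum>j<n. cmod (z j))" by (rule norm_sum)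
  also have "\<dots> = (\<Sum>j<n. \<bar>cmod (z j)\<bar> * \<bar>1\<bar>)" by simp
  also have "\<dots> \<le> L2_set (\<lambda>j. cmod (z j)) {..<n} * L2_set (\<lambda>j. 1) {..<n}"
    by (rule L2_set_mult_ineq)
  finally have a: "cmod (\<Sum>j<n. z j) \<le> L2_set (\<lambda>j. cmod (z j)) {..<n} * sqrt n"
    by (simp add: L2_set_constant)
  have "(cmod (\<Sum>j<n. z j))\<^sup>2 \<le> (L2_set (\<lambda>j. cmod (z j)) {..<n} * sqrt n)\<^sup>2"
    using a by (intro power_mono) auto
  also have "\<dots> = n * (\<Sum>j<n. (cmod (z j))\<^sup>2)"
    by (simp add: L2_set_def power_mult_distrib sum_nonneg)
  finally show ?thesis .
qed

lemma block_sums: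
  fixes a :: "nat \<Rightarrow> 'a::{t2_space,topological_comm_monoid_add}"
  assumes "summable a" "n > 0"
  shows "(\<lambda>k. \<Sum>j<n. a (n*k + j)) sums (suminf a)"
  using sums_group[OF summable_sums[OF assms(1)] assms(2)] by (simp add: block_shift)

lemma Bop_H2: assumes g: "g \<in> H2" and n: "n > 0" shows "Bop n g \<in> H2"
proof -
  have s: "summable (\<lambda>m. (cmod (g m))\<^sup>2)" using g by (simp add: H2_def)
  have "summable (\<lambda>k. \<Sum>j<n. (cmod (g (n*k+j)))\<^sup>2)"
    using block_sums[OF s n] by (rule sums_summable)
  then have "summable (\<lambda>k. n * (\<Sum>j<n. (cmod (g (n*k+j)))\<^sup>2))" by (rule summable_mult)
  then have "summable (\<lambda>k. (cmod (Bop n g k))\<^sup>2)"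
    unfolding Bop_def by (rule summable_comparison_test[rotated]) (auto intro: sq_sum_le)
  then show ?thesis by (simp add: H2_def)
qed

lemma prod_summable: assumes "a \<in> H2" "b \<in> H2"
  shows "summable (\<lambda>m. a m * cnj (b m))"
proof -
  have S: "summable (\<lambda>m. (cmod (a m))\<^sup>2 + (cmod (b m))\<^sup>2)"
    using assms by (auto simp: H2_def intro: summable_add)
  have "norm (a m * cnj (b m)) \<le> (cmod (a m))\<^sup>2 + (cmod (b m))\<^sup>2" for m
  proof -
    have "2 * (cmod (a m) * cmod (b m)) \<le> (cmod (a m))\<^sup>2 + (cmod (b m))\<^sup>2"
      using sum_squares_bound[of "cmod (a m)" "cmod (b m)"] by (simp add: power2_eq_square)
    moreover have "cmod (a m) * cmod (b m) \<ge> 0" by simp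
    ultimately have "cmod (a m) * cmod (b m) \<le> (cmod (a m))\<^sup>2 + (cmod (b m))\<^sup>2" by linarith
    then show ?thesis by (simp add: norm_mult)
  qed
  then have E: "\<exists>N. \<forall>m\<ge>N. norm (a m * cnj (b m)) \<le> (cmod (a m))\<^sup>2 + (cmod (b m))\<^sup>2" by blast
  show ?thesis by (rule summable_comparison_test[OF E S])
qed

lemma W_in_H2: assumes "f \<in> H2" "n > 0" shows "W n f \<in> H2"
  using W_gen_norm(1)[OF assms] unfolding W_def .

lemma inner_W: assumes f: "f \<in> H2" and g: "g \<in> H2" and n: "n > 0"
  shows "h2_inner (W n f) g = h2_inner f (Bop n g)"
proof -
  have s: "summable (\<lambda>m. W n f m * cnj (g m))" by (rule prod_summable[OF W_in_H2[OF f n] g])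
  have "(\<lambda>k. \<Sum>j<n. W n f (n*k+j) * cnj (g (n*k+j))) sums h2_inner (W n f) g"
    unfolding h2_inner_def by (rule block_sums[OF s n])
  moreover have "W n f (n*k+j) = f k" if "j < n" for k j
    unfolding W_def using that by simp
  ultimately have "(\<lambda>k. \<Sum>j<n. f k * cnj (g (n*k+j))) sums h2_inner (W n f) g"
    by simp
  then have "(\<lambda>k. f k * cnj (Bop n g k)) sums h2_inner (W n f) g"
    by (simp add: Bop_def sum_distrib_left)
  then show ?thesis unfolding h2_inner_def by (simp add: sums_iff)
qed

lemma unit_H2: "(\<lambda>m. if m = k then 1 else 0) \<in> H2"
proof -
  have "(\<lambda>m. (cmod (if m = k then 1 else 0 :: complex))\<^sup>2) = (\<lambda>m. if m = k then 1 else 0)"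
    by auto
  then show ?thesis unfolding H2_def by simp
qed

lemma inner_unit: "h2_inner (\<lambda>m. if m = k then 1 else 0) h = cnj (h k)"
proof -
  have "(\<lambda>m. (if m = k then 1 else 0) * cnj (h m)) = (\<lambda>m. if m = k then cnj (h m) else 0)"
    by auto
  then show ?thesis unfolding h2_inner_def using sums_single[of k "\<lambda>m. cnj (h m)"]
    by (simp add: sums_iff)
qed

lemma W_adj_eq: assumes g: "g \<in> H2" and n: "n > 0" shows "W_adj n g = Bop n g"
  unfolding W_adj_def
proof (rule the_equality)
  show "Bop n g \<in> H2 \<and> (\<forall>f\<in>H2. h2_inner (W n f) g = h2_inner f (Bop n g))"
    using Bop_H2[OF g n] inner_W[OF _ g n] by auto
next
  fix h assume h: "h \<in> H2 \<and> (\<forall>f\<in>H2. h2_inner (W n f) g = h2_inner f h)"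
  show "h = Bop n g"
  proof
    fix k
    have "h2_inner (\<lambda>m. if m = k then 1 else 0) h = h2_inner (\<lambda>m. if m = k then 1 else 0) (Bop n g)"
      using h inner_W[OF unit_H2 g n] unit_H2 by metis
    then show "h k = Bop n g k" by (simp add: inner_unit)
  qed
qed


definition Gv :: "nat \<Rightarrow> complex \<Rightarrow> (nat \<Rightarrow> complex) \<Rightarrow> nat \<Rightarrow> nat \<Rightarrow> complex" where
  "Gv n c u i = (\<lambda>m. c^i * u (m div n^i))"

definition G :: "nat \<Rightarrow> complex \<Rightarrow> (nat \<Rightarrow> complex) \<Rightarrow> (nat \<Rightarrow> complex)" where
  "G n c u = (\<lambda>m. \<Sum>i. Gv n c u i m)"

lemma Gv_H2: assumes u: "u \<in> H2" and n: "n > 0"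
  shows "Gv n c u i \<in> H2" "h2_norm (Gv n c u i) = (cmod c * sqrt n)^i * h2_norm u"
proof -
  have N: "n^i > 0" using n by simp
  show "Gv n c u i \<in> H2" unfolding Gv_def by (rule H2_scale(1)[OF W_gen_norm(1)[OF u N]])
  have "h2_norm (Gv n c u i) = cmod (c^i) * (sqrt (real (n^i)) * h2_norm u)"
    unfolding Gv_def H2_scale(2)[OF W_gen_norm(1)[OF u N]] W_gen_norm(2)[OF u N] ..
  also have "\<dots> = (cmod c * sqrt n)^i * h2_norm u"
    by (simp add: norm_power real_sqrt_power power_mult_distrib)
  finally show "h2_norm (Gv n c u i) = (cmod c * sqrt n)^i * h2_norm u" .
qed

lemma Gv_pw_summable:
  assumes v: "\<And>i. v i \<in> H2" and s: "summable (\<lambda>i. h2_norm (v i))"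
  shows "summable (\<lambda>i. v i m)"
  by (rule summable_comparison_test[OF _ s]) (auto intro: coord_le_norm[OF v])

lemma G_props:
  assumes u: "u \<in> H2" and n: "n > 0" and q: "cmod c * sqrt n < 1"
  shows "G n c u \<in> H2"
    "h2_norm (\<lambda>m. G n c u m - u m) \<le> h2_norm u * ((cmod c * sqrt n) / (1 - cmod c * sqrt n))"
    "\<And>m. summable (\<lambda>i. Gv n c u i m)"
proof -
  let ?q = "cmod c * sqrt n"
  have q0: "?q \<ge> 0" by simp
  have geo: "summable (\<lambda>i. ?q^i)" using q q0 by (simp add: summable_geometric)
  have sn: "summable (\<lambda>i. h2_norm (Gv n c u i))"
    unfolding Gv_H2(2)[OF u n] by (rule summable_mult2[OF geo])
  show "G n c u \<in> H2" unfolding G_def by (rule minkowski(1)[OF Gv_H2(1)[OF u n] sn])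
  show pw: "\<And>m. summable (\<lambda>i. Gv n c u i m)" by (rule Gv_pw_summable[OF Gv_H2(1)[OF u n] sn])
  have sn1: "summable (\<lambda>i. h2_norm (Gv n c u (Suc i)))"
    using sn by (subst summable_Suc_iff)
  have eq: "(\<lambda>m. G n c u m - u m) = (\<lambda>m. \<Sum>i. Gv n c u (Suc i) m)"
  proof
    fix m
    have "(\<Sum>i. Gv n c u (Suc i) m) = G n c u m - Gv n c u 0 m"
      unfolding G_def by (rule suminf_split_head[OF pw])
    then show "G n c u m - u m = (\<Sum>i. Gv n c u (Suc i) m)" by (simp add: Gv_def)
  qed
  have "h2_norm (\<lambda>m. G n c u m - u m) \<le> (\<Sum>i. h2_norm (Gv n c u (Suc i)))"
    unfolding eq by (rule minkowski(2)[OF Gv_H2(1)[OF u n] sn1])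
  also have "\<dots> = (\<Sum>i. ?q * ?q^i * h2_norm u)"
    by (simp add: Gv_H2(2)[OF u n])
  also have "\<dots> = ?q * (\<Sum>i. ?q^i) * h2_norm u"
    using suminf_mult[OF summable_mult2[OF geo, of "h2_norm u"], of ?q] suminf_mult2[OF geo, of "h2_norm u"]
    by (simp add: mult.assoc)
  also have "\<dots> = h2_norm u * (?q / (1 - ?q))"
    using q q0 by (simp add: suminf_geometric)
  finally show "h2_norm (\<lambda>m. G n c u m - u m) \<le> h2_norm u * (?q / (1 - ?q))" .
qed

lemma G_eigen:
  assumes u: "u \<in> H2" and n: "n > 0" and q: "cmod c * sqrt n < 1" and Bu: "Bop n u = (\<lambda>k. 0)"
  shows "Bop n (G n c u) = (\<lambda>k. (n * c) * G n c u k)"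
proof
  fix k
  note pw = G_props(3)[OF u n q]
  let ?w = "\<lambda>i. \<Sum>j<n. Gv n c u i (n*k+j)"
  have "Bop n (G n c u) k = (\<Sum>j<n. \<Sum>i. Gv n c u i (n*k+j))" by (simp add: Bop_def G_def)
  also have "\<dots> = (\<Sum>i. ?w i)"
    by (rule suminf_sum[symmetric]) (rule pw)
  also have "\<dots> = (\<Sum>i. ?w (Suc i)) + ?w 0"
    using suminf_split_head[of ?w] summable_sum[of "{..<n}" "\<lambda>j i. Gv n c u i (n*k+j)"] pw by simp
  also have "?w 0 = 0" using fun_cong[OF Bu, of k] by (simp add: Gv_def Bop_def)
  also have "?w (Suc i) = (n * c) * Gv n c u i k" for i
  proof -
    have "(n*k+j) div n^(Suc i) = k div n^i" if "j < n" for j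
      using that n by (simp add: div_mult2_eq)
    then have "?w (Suc i) = (\<Sum>j<n. c^Suc i * u (k div n^i))" by (simp add: Gv_def)
    then show ?thesis by (simp add: Gv_def)
  qed
  then have "(\<Sum>i. ?w (Suc i)) = (\<Sum>i. (n * c) * Gv n c u i k)" by simp
  also have "\<dots> = (n * c) * G n c u k" unfolding G_def by (rule suminf_mult[OF pw])
  finally show "Bop n (G n c u) k = (n * c) * G n c u k" by simp
qed





lemma sum_split_add: fixes f :: "nat \<Rightarrow> 'a::comm_monoid_add"
  shows "(\<Sum>i<m1+m2. f i) = (\<Sum>i<m1. f i) + (\<Sum>i<m2. f (m1+i))"
  by (induction m2) (auto simp: add.assoc)

lemma lin_span_comb:
  assumes "x \<in> lin_span S" "y \<in> lin_span S"
  shows "(\<lambda>k. a * x k + b * y k) \<in> lin_span S"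
proof -
  obtain m1 :: nat and c1 v1 where x: "x = (\<lambda>k. \<Sum>i<m1. c1 i * v1 i k)" and v1: "\<forall>i<m1. v1 i \<in> S"
    using assms(1) unfolding lin_span_def by blast
  obtain m2 :: nat and c2 v2 where y: "y = (\<lambda>k. \<Sum>i<m2. c2 i * v2 i k)" and v2: "\<forall>i<m2. v2 i \<in> S"
    using assms(2) unfolding lin_span_def by blast
  define c where "c = (\<lambda>i. if i < m1 then a * c1 i else b * c2 (i - m1))"
  define v where "v = (\<lambda>i. if i < m1 then v1 i else v2 (i - m1))"
  have "(\<lambda>k. a * x k + b * y k) = (\<lambda>k. \<Sum>i<m1+m2. c i * v i k)"
  proof
    fix k
    have "(\<Sum>i<m1+m2. c i * v i k) = (\<Sum>i<m1. c i * v i k) + (\<Sum>i<m2. c (m1+i) * v (m1+i) k)"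
      by (rule sum_split_add)
    also have "(\<Sum>i<m1. c i * v i k) = a * x k"
      unfolding x by (simp add: c_def v_def sum_distrib_left mult.assoc)
    also have "(\<Sum>i<m2. c (m1+i) * v (m1+i) k) = b * y k"
      unfolding y by (simp add: c_def v_def sum_distrib_left mult.assoc)
    finally show "a * x k + b * y k = (\<Sum>i<m1+m2. c i * v i k)" by simp
  qed
  moreover have "\<forall>i<m1+m2. v i \<in> S" using v1 v2 by (auto simp: v_def)
  ultimately show ?thesis unfolding lin_span_def mem_Collect_eq
    by (intro exI[of _ "m1+m2"] exI[of _ c] exI[of _ v] conjI)
qed

lemma lin_span_base: "x \<in> S \<Longrightarrow> x \<in> lin_span S"
  unfolding lin_span_def
  by (rule CollectI, rule exI[of _ 1], rule exI[of _ "\<lambda>i. 1"], rule exI[of _ "\<lambda>i. x"]) auto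


lemma lin_span_H2: assumes "S \<subseteq> H2" shows "lin_span S \<subseteq> H2"
proof
  fix x assume "x \<in> lin_span S"
  then obtain m :: nat and c v where x: "x = (\<lambda>k. \<Sum>i<m. c i * v i k)" and v: "\<forall>i<m. v i \<in> S"
    unfolding lin_span_def by blast
  show "x \<in> H2" unfolding x by (rule H2_sum) (use v assms in auto)
qed

definition Eset :: "nat \<Rightarrow> (nat \<Rightarrow> complex) set" where
  "Eset n = (\<Union>\<mu>\<in>{\<mu>::complex. cmod \<mu> < 1}. ker_Wadj n \<mu>)"

definition cl :: "nat \<Rightarrow> (nat \<Rightarrow> complex) set" where
  "cl n = {f \<in> H2. \<forall>\<epsilon>>0. \<exists>g\<in>lin_span (Eset n). h2_norm (\<lambda>k. f k - g k) < \<epsilon>}"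

lemma Eset_H2: "Eset n \<subseteq> H2" unfolding Eset_def ker_Wadj_def by auto

lemma D_H2: "lin_span (Eset n) \<subseteq> H2" by (rule lin_span_H2[OF Eset_H2])

lemma D_cl: "g \<in> lin_span (Eset n) \<Longrightarrow> g \<in> cl n"
  unfolding cl_def using D_H2 H2_zero(2) by (auto intro!: bexI[of _ g])

lemma cl_H2: "x \<in> cl n \<Longrightarrow> x \<in> H2" unfolding cl_def by auto

lemma cl_comb:
  assumes x: "x \<in> cl n" and y: "y \<in> cl n"
  shows "(\<lambda>k. a * x k + b * y k) \<in> cl n"
proof -
  have xH: "x \<in> H2" and yH: "y \<in> H2" using x y by (auto simp: cl_def)
  have "\<exists>g\<in>lin_span (Eset n). h2_norm (\<lambda>k. (a * x k + b * y k) - g k) < \<epsilon>" if e: "\<epsilon> > 0" for \<epsilon>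
  proof -
    define d where "d = \<epsilon> / (2 * (cmod a + cmod b + 1))"
    have X0: "cmod a + cmod b + 1 > 0" by (smt (verit) norm_ge_zero)
    then have d: "d > 0" using e by (simp add: d_def)
    obtain g1 where g1: "g1 \<in> lin_span (Eset n)" "h2_norm (\<lambda>k. x k - g1 k) < d"
      using x d unfolding cl_def by blast
    obtain g2 where g2: "g2 \<in> lin_span (Eset n)" "h2_norm (\<lambda>k. y k - g2 k) < d"
      using y d unfolding cl_def by blast
    have g1H: "g1 \<in> H2" and g2H: "g2 \<in> H2" using g1 g2 D_H2 by auto
    have eq: "(\<lambda>k. (a * x k + b * y k) - (a * g1 k + b * g2 k)) =
      (\<lambda>k. (\<lambda>k. a * (x k - g1 k)) k + (\<lambda>k. b * (y k - g2 k)) k)"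
      by (auto simp: algebra_simps)
    have "h2_norm (\<lambda>k. (a * x k + b * y k) - (a * g1 k + b * g2 k))
       \<le> h2_norm (\<lambda>k. a * (x k - g1 k)) + h2_norm (\<lambda>k. b * (y k - g2 k))"
      unfolding eq by (rule H2_add(2); rule H2_scale(1); rule H2_diff; fact)
    also have "\<dots> = cmod a * h2_norm (\<lambda>k. x k - g1 k) + cmod b * h2_norm (\<lambda>k. y k - g2 k)"
      using H2_scale(2)[OF H2_diff[OF xH g1H]] H2_scale(2)[OF H2_diff[OF yH g2H]] by simp
    also have "\<dots> \<le> cmod a * d + cmod b * d"
      using g1(2) g2(2) by (intro add_mono mult_left_mono) auto
    also have "\<dots> < \<epsilon>"
    proof -
      have "(cmod a + cmod b) * d < (cmod a + cmod b + 1) * d" using d by simp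
      also have "\<dots> = \<epsilon> / 2" unfolding d_def using X0 by (simp add: field_simps)
      finally show ?thesis using e by (simp add: algebra_simps)
    qed
    finally have hlt: "h2_norm (\<lambda>k. (a * x k + b * y k) - (a * g1 k + b * g2 k)) < \<epsilon>" .
    show ?thesis by (rule bexI[OF _ lin_span_comb[OF g1(1) g2(1), of a b]]) (use hlt in simp)
  qed
  moreover have "(\<lambda>k. a * x k + b * y k) \<in> H2"
    using H2_add(1)[OF H2_scale(1)[OF xH] H2_scale(1)[OF yH]] by simp
  ultimately show ?thesis unfolding cl_def by blast
qed

lemma cl_limit:
  assumes f: "f \<in> H2" and a: "\<And>\<epsilon>. \<epsilon> > 0 \<Longrightarrow> \<exists>h\<in>cl n. h2_norm (\<lambda>k. f k - h k) < \<epsilon>"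
  shows "f \<in> cl n"
proof -
  have "\<exists>g\<in>lin_span (Eset n). h2_norm (\<lambda>k. f k - g k) < \<epsilon>" if e: "\<epsilon> > 0" for \<epsilon>
  proof -
    have e2: "\<epsilon>/2 > 0" using e by simp
    obtain h where h: "h \<in> cl n" "h2_norm (\<lambda>k. f k - h k) < \<epsilon>/2" using a[OF e2] by blast
    have "\<forall>\<epsilon>>0. \<exists>g\<in>lin_span (Eset n). h2_norm (\<lambda>k. h k - g k) < \<epsilon>" using h(1) by (simp add: cl_def)
    then obtain g where g: "g \<in> lin_span (Eset n)" "h2_norm (\<lambda>k. h k - g k) < \<epsilon>/2"
      using e2 by blast
    have "h2_norm (\<lambda>k. f k - g k) \<le> h2_norm (\<lambda>k. f k - h k) + h2_norm (\<lambda>k. h k - g k)"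
      by (rule h2_norm_diff_tri[OF f cl_H2[OF h(1)]]) (use g D_H2 in auto)
    then have "h2_norm (\<lambda>k. f k - g k) < \<epsilon>" using h(2) g(2) by linarith
    then show ?thesis using g(1) by blast
  qed
  then show ?thesis unfolding cl_def using f by blast
qed

lemma cl_zero: "(\<lambda>k. 0) \<in> cl n"
proof -
  have "(\<lambda>k. 0) \<in> lin_span (Eset n)" unfolding lin_span_def mem_Collect_eq
    by (intro exI[of _ "0::nat"] exI[of _ "\<lambda>i. 0"] exI[of _ "\<lambda>i. \<lambda>k. 0"] conjI) auto
  then show ?thesis by (rule D_cl)
qed

lemma cl_sum: fixes m :: nat
  assumes "\<And>i. i < m \<Longrightarrow> v i \<in> cl n"
  shows "(\<lambda>k. \<Sum>i<m. c i * v i k) \<in> cl n"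
  using assms
proof (induction m)
  case 0 then show ?case using cl_zero by simp
next
  case (Suc m)
  then show ?case using cl_comb[OF Suc.IH Suc.prems[of m], of 1 "c m"] by simp
qed




lemma ker_Bop: assumes "n > 0" "g \<in> ker_Wadj n \<mu>"
  shows "g \<in> H2" "Bop n g = (\<lambda>k. \<mu> * g k)"
proof -
  show gH: "g \<in> H2" using assms(2) by (simp add: ker_Wadj_def)
  have "(\<lambda>k. W_adj n g k - \<mu> * g k) = (\<lambda>k. 0)" using assms(2) by (simp add: ker_Wadj_def)
  then show "Bop n g = (\<lambda>k. \<mu> * g k)" unfolding W_adj_eq[OF gH assms(1)]
    by (metis (no_types, lifting) eq_iff_diff_eq_0)
qed

lemma ker_I: assumes "n > 0" "g \<in> H2" "Bop n g = (\<lambda>k. \<mu> * g k)" "cmod \<mu> < 1"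
  shows "g \<in> Eset n"
proof -
  have "g \<in> ker_Wadj n \<mu>" using assms(2,3) by (simp add: ker_Wadj_def W_adj_eq[OF assms(2,1)])
  then show ?thesis unfolding Eset_def using assms(4) by blast
qed

lemma Bop_W: assumes "n > 0" shows "Bop n (W n g) = (\<lambda>k. n * g k)"
proof
  fix k
  have "(n*k+j) div n = k" if "j < n" for j using that assms by simp
  then show "Bop n (W n g) k = n * g k" by (simp add: Bop_def W_def)
qed

lemma Bop_comb: "Bop n (\<lambda>k. a * x k + b * y k) = (\<lambda>k. a * Bop n x k + b * Bop n y k)"
  by (simp add: Bop_def sum.distrib sum_distrib_left)

lemma W_E_nonzero:
  assumes n: "n > 0" and g: "g \<in> ker_Wadj n \<mu>" and mu: "\<mu> \<noteq> 0" "cmod \<mu> < 1"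
  shows "W n g \<in> lin_span (Eset n)"
proof -
  have gH: "g \<in> H2" and Bg: "Bop n g = (\<lambda>k. \<mu> * g k)" using ker_Bop[OF n g] by auto
  define u where "u = (\<lambda>k. 1 * g k + (- \<mu> / n) * W n g k)"
  have uH: "u \<in> H2" unfolding u_def
    by (rule H2_add(1); rule H2_scale(1)) (auto intro: gH W_in_H2[OF gH n])
  have "Bop n u = (\<lambda>k. 0 * u k)" unfolding u_def Bop_comb Bg Bop_W[OF n] using n by auto
  then have uE: "u \<in> Eset n" by (rule ker_I[OF n uH]) simp
  have gE: "g \<in> Eset n" using g mu unfolding Eset_def by blast
  have eq: "W n g = (\<lambda>k. (n / \<mu>) * g k + (- n / \<mu>) * u k)"
    unfolding u_def using mu n by (auto simp: field_simps)
  show ?thesis unfolding eq by (rule lin_span_comb[OF lin_span_base[OF gE] lin_span_base[OF uE]])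
qed

lemma W_E:
  assumes n: "n > 0" and g: "g \<in> Eset n"
  shows "W n g \<in> cl n"
proof -
  obtain \<mu> where mu: "cmod \<mu> < 1" "g \<in> ker_Wadj n \<mu>" using g unfolding Eset_def by blast
  have gH: "g \<in> H2" and Bg: "Bop n g = (\<lambda>k. \<mu> * g k)" using ker_Bop[OF n mu(2)] by auto
  show ?thesis
  proof (cases "\<mu> = 0")
    case False
    then show ?thesis using W_E_nonzero[OF n mu(2) False mu(1)] D_cl by blast
  next
    case True
    have Bg0: "Bop n g = (\<lambda>k. 0)" using Bg True by simp
    have sn: "sqrt n \<ge> 1" using n by simp
    show ?thesis
    proof (rule cl_limit[OF W_in_H2[OF gH n]])
      fix \<epsilon> :: real assume e: "\<epsilon> > 0"
      define r where "r = min (1/2) (\<epsilon> / (4 * sqrt n * (h2_norm g + 1)))"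
      have hn: "h2_norm g \<ge> 0" by (rule h2_norm_nonneg[OF gH])
      have r0: "r > 0" unfolding r_def using e hn n by auto
      have r1: "r \<le> 1/2" unfolding r_def by simp
      have Y: "4 * sqrt n * (h2_norm g + 1) > 0" using hn n by simp
      have rle: "r \<le> \<epsilon> / (4 * sqrt n * (h2_norm g + 1))" by (simp add: r_def)
      have r2: "r * (4 * sqrt n * (h2_norm g + 1)) \<le> \<epsilon>"
      proof -
        have "r * (4 * sqrt n * (h2_norm g + 1)) \<le> \<epsilon> / (4 * sqrt n * (h2_norm g + 1)) * (4 * sqrt n * (h2_norm g + 1))"
          by (rule mult_right_mono[OF rle]) (use Y in simp)
        also have "\<dots> = \<epsilon>" by (metis Y less_irrefl nonzero_eq_divide_eq)
        finally show ?thesis .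
      qed
      define c where "c = complex_of_real (r / n)"
      have cc: "cmod c = r / real n" unfolding c_def using r0 n by (simp add: norm_divide)
      have cq: "cmod c * sqrt n = r / sqrt n"
      proof -
        have s0: "sqrt (real n) > 0" using n by simp
        have "real n = sqrt (real n) * sqrt (real n)" by simp
        then have "r / real n * sqrt n = r / (sqrt (real n) * sqrt (real n)) * sqrt n" by simp
        also have "\<dots> = r / sqrt n" using s0 by (simp add: field_simps)
        finally show ?thesis unfolding cc .
      qed
      have q: "cmod c * sqrt n \<le> r" unfolding cq using sn r0
        by (simp add: divide_le_eq mult_le_cancel_left1 order_trans)
      have q0: "cmod c * sqrt n \<ge> 0" by simp
      have q1: "cmod c * sqrt n < 1" using q r1 by simp
      have nc: "n * c = complex_of_real r" unfolding c_def using n by simp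
      have nc1: "cmod (n * c) < 1" unfolding nc using r0 r1 by simp
      have nc0: "n * c \<noteq> 0" unfolding nc using r0 by simp
      have GH: "G n c g \<in> H2" by (rule G_props(1)[OF gH n q1])
      have Gker: "G n c g \<in> ker_Wadj n (n * c)"
      proof -
        have "W_adj n (G n c g) = (\<lambda>k. (n * c) * G n c g k)"
          using W_adj_eq[OF GH n] G_eigen[OF gH n q1 Bg0] by simp
        then show ?thesis using GH by (simp add: ker_Wadj_def)
      qed
      have hcl: "W n (G n c g) \<in> cl n" using W_E_nonzero[OF n Gker nc0 nc1] D_cl by blast
      have dH: "(\<lambda>k. g k - G n c g k) \<in> H2" by (rule H2_diff[OF gH GH])
      have "h2_norm (\<lambda>k. W n g k - W n (G n c g) k) = h2_norm (\<lambda>m. (\<lambda>k. g k - G n c g k) (m div n))"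
        by (simp add: W_def)
      also have "\<dots> = sqrt n * h2_norm (\<lambda>k. g k - G n c g k)" by (rule W_gen_norm(2)[OF dH n])
      also have "\<dots> = sqrt n * h2_norm (\<lambda>k. G n c g k - g k)" by (simp add: h2_norm_commute)
      also have "\<dots> \<le> sqrt n * (h2_norm g * ((cmod c * sqrt n) / (1 - cmod c * sqrt n)))"
        using G_props(2)[OF gH n q1] sn by (intro mult_left_mono) auto
      also have "\<dots> \<le> sqrt n * ((h2_norm g + 1) * (2 * r))"
      proof -
        have p: "0 \<le> r * (1 - 2 * (cmod c * sqrt n))" using r0 q r1 by (intro mult_nonneg_nonneg) auto
        have e1: "2 * r * (1 - cmod c * sqrt n) = 2 * r - 2 * (r * (cmod c * sqrt n))"
          and e2: "r * (1 - 2 * (cmod c * sqrt n)) = r - 2 * (r * (cmod c * sqrt n))"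
          by (simp_all add: algebra_simps)
        have "cmod c * sqrt n \<le> 2 * r * (1 - cmod c * sqrt n)" using p q unfolding e1 e2 by linarith
        then have "(cmod c * sqrt n) / (1 - cmod c * sqrt n) \<le> 2 * r"
          using q1 by (simp add: divide_le_eq)
        moreover have "(cmod c * sqrt n) / (1 - cmod c * sqrt n) \<ge> 0" using q0 q1 by simp
        ultimately show ?thesis using hn sn
          by (intro mult_left_mono mult_mono) auto
      qed
      also have "\<dots> = (r * (4 * sqrt n * (h2_norm g + 1))) / 2" by (simp add: algebra_simps)
      also have "\<dots> < \<epsilon>" using r2 e by simp
      finally show "\<exists>h\<in>cl n. h2_norm (\<lambda>k. W n g k - h k) < \<epsilon>" using hcl by blast
    qed
  qed
qed

lemma W_cl: assumes n: "n > 0" and x: "x \<in> cl n" shows "W n x \<in> cl n"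
proof -
  have xH: "x \<in> H2" using x by (rule cl_H2)
  have WD: "W n g \<in> cl n" if gin: "g \<in> lin_span (Eset n)" for g
  proof -
    obtain m :: nat and c v where g: "g = (\<lambda>k. \<Sum>i<m. c i * v i k)" and v: "\<forall>i<m. v i \<in> Eset n"
      using gin unfolding lin_span_def by blast
    have "W n g = (\<lambda>k. \<Sum>i<m. c i * W n (v i) k)" unfolding g by (simp add: W_def)
    then show ?thesis using cl_sum[of m "\<lambda>i. W n (v i)" n c] W_E[OF n] v by simp
  qed
  show ?thesis
  proof (rule cl_limit[OF W_in_H2[OF xH n]])
    fix \<epsilon> :: real assume e: "\<epsilon> > 0"
    have sn: "sqrt n > 0" using n by simp
    have es: "\<epsilon> / sqrt n > 0" using e sn by simp
    have "\<forall>\<epsilon>>0. \<exists>g\<in>lin_span (Eset n). h2_norm (\<lambda>k. x k - g k) < \<epsilon>" using x by (simp add: cl_def)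
    then obtain g where g: "g \<in> lin_span (Eset n)" "h2_norm (\<lambda>k. x k - g k) < \<epsilon> / sqrt n"
      using es by blast
    have gH: "g \<in> H2" using g(1) D_H2 by auto
    have dH: "(\<lambda>k. x k - g k) \<in> H2" by (rule H2_diff[OF xH gH])
    have "h2_norm (\<lambda>k. W n x k - W n g k) = h2_norm (\<lambda>m. (\<lambda>k. x k - g k) (m div n))"
      by (simp add: W_def)
    also have "\<dots> = sqrt n * h2_norm (\<lambda>k. x k - g k)" by (rule W_gen_norm(2)[OF dH n])
    also have "\<dots> < \<epsilon>" using g(2) sn by (simp add: field_simps)
    finally show "\<exists>h\<in>cl n. h2_norm (\<lambda>k. W n x k - h k) < \<epsilon>" using WD[OF g(1)] by blast
  qed
qed





definition P :: "nat \<Rightarrow> nat \<Rightarrow> nat \<Rightarrow> complex" where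
  "P n K = (\<lambda>m. if m < n^K then 1 / of_nat (n^K) else 0)"

lemma fin_H2: assumes "\<And>m. m \<ge> M \<Longrightarrow> x m = 0" shows "x \<in> H2"
  unfolding H2_def by (rule CollectI, rule summable_finite[of "{..<M}"]) (use assms in auto)

lemma Z_cl: assumes "n > 0" "x \<in> H2" "Bop n x = (\<lambda>k. 0)" shows "x \<in> cl n"
proof -
  have "x \<in> Eset n" by (rule ker_I[OF assms(1,2)]) (use assms(3) in auto)
  then show ?thesis by (intro D_cl lin_span_base)
qed

lemma W_P: assumes n: "n > 0" shows "W n (P n K) = (\<lambda>m. of_nat n * P n (Suc K) m)"
proof
  fix m
  have "m div n < n^K \<longleftrightarrow> m < n^Suc K" using n
    by (simp add: div_less_iff_less_mult mult.commute)
  then show "W n (P n K) m = of_nat n * P n (Suc K) m"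
    unfolding W_def P_def using n by (simp add: field_simps)
qed

lemma P_H2: "P n K \<in> H2"
  by (rule fin_H2[of "n^K"]) (simp add: P_def)

lemma P_diff1: assumes n: "n > 0" shows "(\<lambda>m. P n K m - P n (Suc K) m) \<in> cl n"
proof (induction K)
  case 0
  let ?x = "\<lambda>m. P n 0 m - P n (Suc 0) m"
  have xH: "?x \<in> H2" by (rule H2_diff[OF P_H2 P_H2])
  have "Bop n ?x k = 0" for k
  proof (cases "k = 0")
    case True
    have "(\<Sum>j<n. (if j < 1 then 1 else 0 :: complex)) = 1"
      using n by (simp add: sum.delta)
    moreover have "(\<Sum>j<n. (if j < n then 1 / of_nat n else 0 :: complex)) = 1"
      using n by simp
    ultimately show ?thesis using True n by (simp add: Bop_def P_def sum_subtractf)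
  next
    case False
    then have "n*k+j \<ge> n" for j using n
      by (metis le_add1 le_trans mult_le_mono2 nat_mult_1_right not_less_eq_eq One_nat_def neq0_conv Suc_leI)
    then show ?thesis using n False by (simp add: Bop_def P_def not_less[symmetric])
  qed
  then show ?case by (intro Z_cl[OF n xH]) auto
next
  case (Suc K)
  have "(\<lambda>m. P n (Suc K) m - P n (Suc (Suc K)) m) =
     (\<lambda>m. (1 / of_nat n) * W n (\<lambda>m. P n K m - P n (Suc K) m) m + 0 * (\<lambda>k. 0) m)"
  proof
    fix m
    have "W n (\<lambda>m. P n K m - P n (Suc K) m) m = W n (P n K) m - W n (P n (Suc K)) m"
      by (simp add: W_def)
    then show "P n (Suc K) m - P n (Suc (Suc K)) m =
      (1 / of_nat n) * W n (\<lambda>m. P n K m - P n (Suc K) m) m + 0 * (\<lambda>k. 0) m"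
      unfolding W_P[OF n] using n by (simp add: field_simps)
  qed
  then show ?case using cl_comb[OF W_cl[OF n Suc.IH] cl_zero, of "1 / of_nat n" 0] by simp
qed

lemma P_diff: assumes n: "n > 0" shows "(\<lambda>m. P n K m - P n (K + j) m) \<in> cl n"
proof (induction j)
  case 0 then show ?case using cl_zero by simp
next
  case (Suc j)
  then show ?case using cl_comb[OF Suc.IH P_diff1[OF n, of "K + j"], of 1 1] by simp
qed

lemma claimB: assumes n: "n > 0"
  shows "(\<And>m. m \<ge> n^K \<Longrightarrow> x m = 0) \<Longrightarrow> \<exists>t. (\<lambda>m. x m - t * P n K m) \<in> cl n"
proof (induction K arbitrary: x)
  case 0
  have "(\<lambda>m. x m - x 0 * P n 0 m) = (\<lambda>k. 0)"
  proof
    fix m show "x m - x 0 * P n 0 m = 0" using 0[of m] by (cases "m = 0") (auto simp: P_def)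
  qed
  then show ?case using cl_zero by metis
next
  case (Suc K)
  define y where "y = Bop n x"
  have ysupp: "y k = 0" if "k \<ge> n^K" for k
  proof -
    have a: "n * n^K \<le> n * k" using that by (rule mult_le_mono2)
    have "n * k + j \<ge> n ^ Suc K" for j using a by (metis power_Suc trans_le_add1)
    then show ?thesis using Suc.prems by (simp add: y_def Bop_def)
  qed
  obtain t where t: "(\<lambda>m. y m - t * P n K m) \<in> cl n" using Suc.IH[of y] ysupp by blast
  define u where "u = (\<lambda>m. 1 * x m + (- 1 / of_nat n) * W n y m)"
  have usupp: "u m = 0" if "m \<ge> n ^ Suc K" for m
  proof -
    have "m div n \<ge> n^K" using that n
      by (metis div_le_mono nonzero_mult_div_cancel_left not_gr0 power_Suc)
    then show ?thesis using Suc.prems[OF that] ysupp by (simp add: u_def W_def)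
  qed
  have "Bop n u = (\<lambda>k. 0)" unfolding u_def Bop_comb Bop_W[OF n] using n by (simp add: y_def)
  moreover have uH: "u \<in> H2" by (rule fin_H2[of "n^Suc K"]) (rule usupp)
  ultimately have ucl: "u \<in> cl n" using Z_cl[OF n] by blast
  have "(\<lambda>m. x m - t * P n (Suc K) m) = (\<lambda>m. 1 * u m + (1 / of_nat n) * W n (\<lambda>m. y m - t * P n K m) m)"
  proof
    fix m
    have h0: "P n K (m div n) = of_nat n * P n (Suc K) m" using fun_cong[OF W_P[OF n, of K], of m] by (simp add: W_def)
    show "x m - t * P n (Suc K) m = 1 * u m + (1 / of_nat n) * W n (\<lambda>m. y m - t * P n K m) m"
      unfolding u_def W_def h0 using n by (simp add: field_simps)
  qed
  then show ?case using cl_comb[OF ucl W_cl[OF n t]] by metis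
qed

lemma P_norm: assumes n: "n > 0" shows "h2_norm (\<lambda>m. t * P n K m) = cmod t / sqrt (n^K)"
proof -
  have "(\<Sum>m. (cmod (P n K m))\<^sup>2) = (\<Sum>m<n^K. (cmod (P n K m))\<^sup>2)"
    by (rule suminf_finite) (auto simp: P_def)
  also have "\<dots> = (\<Sum>m<n^K. 1 / (real n ^ K)\<^sup>2)"
    by (rule sum.cong) (auto simp: P_def norm_divide norm_power power_divide)
  also have "\<dots> = 1 / real n ^ K" using n by (simp add: power2_eq_square)
  finally have "h2_norm (P n K) = 1 / sqrt (n^K)" unfolding h2_norm_def by (simp add: real_sqrt_divide)
  then show ?thesis using H2_scale(2)[OF P_H2, of t n K] by simp
qed

lemma fin_cl: assumes n: "n \<ge> 2" and x: "\<And>m. m \<ge> M \<Longrightarrow> x m = 0" shows "x \<in> cl n"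
proof -
  have n0: "n > 0" using n by simp
  have "M < 2^M" by (rule less_exp)
  also have "\<dots> \<le> n^M" using n by (simp add: power_mono)
  finally have "\<And>m. m \<ge> n^M \<Longrightarrow> x m = 0" using x by simp
  then obtain t where t: "(\<lambda>m. x m - t * P n M m) \<in> cl n" using claimB[OF n0] by blast
  show ?thesis
  proof (rule cl_limit[OF fin_H2[OF x]])
    fix \<epsilon> :: real assume e: "\<epsilon> > 0"
    have "real n > 1" using n by simp
    then obtain j where j: "(cmod t / \<epsilon>)\<^sup>2 < real n ^ j" using real_arch_pow by blast
    have "real n ^ j \<le> real n ^ (M + j)" using n by (simp add: power_increasing)
    then have "(cmod t / \<epsilon>)\<^sup>2 < real (n ^ (M + j))" using j by simp
    then have "cmod t / \<epsilon> < sqrt (n ^ (M + j))"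
      using e by (metis real_less_rsqrt)
    then have small: "cmod t / sqrt (n ^ (M + j)) < \<epsilon>"
      using e n0 by (simp add: field_simps)
    define h where "h = (\<lambda>m. 1 * (\<lambda>m. x m - t * P n M m) m + t * (\<lambda>m. P n M m - P n (M + j) m) m)"
    have hcl: "h \<in> cl n" unfolding h_def by (rule cl_comb[OF t P_diff[OF n0]])
    have "(\<lambda>k. x k - h k) = (\<lambda>m. t * P n (M + j) m)" unfolding h_def by (auto simp: algebra_simps)
    then have "h2_norm (\<lambda>k. x k - h k) < \<epsilon>" using P_norm[OF n0] small by simp
    then show "\<exists>h\<in>cl n. h2_norm (\<lambda>k. x k - h k) < \<epsilon>" using hcl by blast
  qed
qed

lemma all_cl: assumes n: "n \<ge> 2" and f: "f \<in> H2" shows "f \<in> cl n"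
proof (rule cl_limit[OF f])
  fix \<epsilon> :: real assume e: "\<epsilon> > 0"
  have s: "summable (\<lambda>m. (cmod (f m))\<^sup>2)" using f by (simp add: H2_def)
  obtain M where M: "\<And>k. k \<ge> M \<Longrightarrow> norm (\<Sum>i. (cmod (f (i + k)))\<^sup>2) < \<epsilon>\<^sup>2"
    using suminf_exist_split[OF _ s, of "\<epsilon>\<^sup>2"] e by auto
  define h where "h = (\<lambda>m. if m < M then f m else 0)"
  have hcl: "h \<in> cl n" by (rule fin_cl[OF n, of M]) (simp add: h_def)
  let ?d = "\<lambda>m. (cmod (f m - h m))\<^sup>2"
  have ds: "summable ?d"
    by (rule summable_comparison_test[OF _ s]) (auto simp: h_def)
  have "(\<Sum>m. ?d m) = (\<Sum>i. ?d (i + M)) + (\<Sum>i<M. ?d i)" by (rule suminf_split_initial_segment[OF ds])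
  also have "(\<Sum>i<M. ?d i) = 0" by (simp add: h_def)
  also have "(\<Sum>i. ?d (i + M)) = (\<Sum>i. (cmod (f (i + M)))\<^sup>2)" by (simp add: h_def)
  finally have "(\<Sum>m. ?d m) < \<epsilon>\<^sup>2" using M[of M] by simp
  then have "sqrt (\<Sum>m. ?d m) < sqrt (\<epsilon>\<^sup>2)" by (rule real_sqrt_less_mono)
  then have "h2_norm (\<lambda>k. f k - h k) < \<epsilon>" unfolding h2_norm_def using e by simp
  then show "\<exists>h\<in>cl n. h2_norm (\<lambda>k. f k - h k) < \<epsilon>" using hcl by blast
qed

theorem mainTheorem5:
  fixes n :: nat
  assumes "n \<ge> 2"
  shows "dense_in_H2 (lin_span (\<Union>\<mu>\<in>{\<mu>::complex. cmod \<mu> < 1}. ker_Wadj n \<mu>))"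
  unfolding dense_in_H2_def
proof (intro ballI allI impI)
  fix f :: "nat \<Rightarrow> complex" and \<epsilon> :: real
  assume "f \<in> H2" "\<epsilon> > 0"
  then show "\<exists>g\<in>lin_span (\<Union>\<mu>\<in>{\<mu>::complex. cmod \<mu> < 1}. ker_Wadj n \<mu>). h2_norm (\<lambda>k. f k - g k) < \<epsilon>"
    using all_cl[OF assms] unfolding cl_def Eset_def by blast
qed

end
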